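(* A $po$-$\Gamma$-semigroup $M$ is right regular if and only if for every fuzzy subset $f$ of $M$ we have $f\preceq (f\circ f)\circ 1$.
   Context: Let $M$ and $\Gamma$ be nonempty sets with a map $M\times\Gamma\times M\to M$, $(a,\gamma,b)\mapsto a\gamma b$, satisfying $(a\gamma b)\mu c=a\gamma(b\mu c)$ for all $a,b,c\in M$, $\gamma,\mu\in\Gamma$. A $po$-$\Gamma$-semigroup is such an $M$ with a partial order $\le$ such that $a\le b$ implies $a\gamma c\le b\gamma c$ and $c\gamma a\le c\gamma b$ for all $c\in M$, $\gamma\in\Gamma$. For $H\subseteq M$, $(H]=\{t\in M: t\le h \text{ for some } h\in H\}$; $a\Gamma a\Gamma M=\{a\gamma a\mu x: x\in M,\gamma,\mu\in\Gamma\}$. $M$ is right regular if $a\in(a\Gamma a\Gamma M]$ for every $a\in M$. A fuzzy subset of $M$ is a map $M\to[0,1]$; $1$ is the constant fuzzy subset with value $1$. For $c\in M$ let $A_c=\{(y,z)\in M\times M: c\le y\gamma z \text{ for some }\gamma\in\Gamma\}$. $(f\circ g)(c)=\bigvee_{(y,z)\in A_c}\min\{f(y),g(z)\}$ if $A_c\ne\emptyset$, and $0$ otherwise. $f\preceq g$ means $f(c)\le g(c)$ for all $c\in M$. *)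

theory Defs
  imports Complex_Main
begin

(* A po-Gamma-semigroup: carrier = UNIV of type 'm, Gamma = UNIV of type 'g
   (HOL types are nonempty), ternary operation op, partial order le. *)
definition po_gamma_semigroup ::
  "('m \<Rightarrow> 'g \<Rightarrow> 'm \<Rightarrow> 'm) \<Rightarrow> ('m \<Rightarrow> 'm \<Rightarrow> bool) \<Rightarrow> bool" where
  "po_gamma_semigroup op le \<longleftrightarrow>
     (\<forall>a b c \<gamma> \<mu>. op (op a \<gamma> b) \<mu> c = op a \<gamma> (op b \<mu> c)) \<and>
     (\<forall>a. le a a) \<and>
     (\<forall>a b. le a b \<and> le b a \<longrightarrow> a = b) \<and>
     (\<forall>a b c. le a b \<and> le b c \<longrightarrow> le a c) \<and>
     (\<forall>a b c \<gamma>. le a b \<longrightarrow> le (op a \<gamma> c) (op b \<gamma> c) \<and> le (op c \<gamma> a) (op c \<gamma> b))"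

definition down_closure :: "('m \<Rightarrow> 'm \<Rightarrow> bool) \<Rightarrow> 'm set \<Rightarrow> 'm set" where
  "down_closure le H = {t. \<exists>h\<in>H. le t h}"

definition aGaGM :: "('m \<Rightarrow> 'g \<Rightarrow> 'm \<Rightarrow> 'm) \<Rightarrow> 'm \<Rightarrow> 'm set" where
  "aGaGM op a = {op (op a \<gamma> a) \<mu> x | x \<gamma> \<mu>. True}"

definition right_regular ::
  "('m \<Rightarrow> 'g \<Rightarrow> 'm \<Rightarrow> 'm) \<Rightarrow> ('m \<Rightarrow> 'm \<Rightarrow> bool) \<Rightarrow> bool" where
  "right_regular op le \<longleftrightarrow> (\<forall>a. a \<in> down_closure le (aGaGM op a))"

definition fuzzy_subset :: "('m \<Rightarrow> real) \<Rightarrow> bool" where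
  "fuzzy_subset f \<longleftrightarrow> (\<forall>x. 0 \<le> f x \<and> f x \<le> 1)"

definition A_set :: "('m \<Rightarrow> 'g \<Rightarrow> 'm \<Rightarrow> 'm) \<Rightarrow> ('m \<Rightarrow> 'm \<Rightarrow> bool) \<Rightarrow> 'm \<Rightarrow> ('m \<times> 'm) set" where
  "A_set op le c = {(y, z). \<exists>\<gamma>. le c (op y \<gamma> z)}"

(* fuzzy product f o g; the supremum is the real Sup of a nonempty set bounded by 1 *)
definition fuzzy_comp ::
  "('m \<Rightarrow> 'g \<Rightarrow> 'm \<Rightarrow> 'm) \<Rightarrow> ('m \<Rightarrow> 'm \<Rightarrow> bool) \<Rightarrow> ('m \<Rightarrow> real) \<Rightarrow> ('m \<Rightarrow> real) \<Rightarrow> 'm \<Rightarrow> real" where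
  "fuzzy_comp op le f g c =
     (if A_set op le c \<noteq> {}
      then Sup ((\<lambda>(y, z). min (f y) (g z)) ` A_set op le c)
      else 0)"

definition fuzzy_le :: "('m \<Rightarrow> real) \<Rightarrow> ('m \<Rightarrow> real) \<Rightarrow> bool" where
  "fuzzy_le f g \<longleftrightarrow> (\<forall>c. f c \<le> g c)"

end

theory Submission
  imports Defs
begin

lemma comp_ge:
  assumes "\<forall>x. f x \<le> 1" "\<forall>x. g x \<le> 1" "(y, z) \<in> A_set op le c"
  shows "min (f y) (g z) \<le> fuzzy_comp op le f g c"
proof -
  have ne: "A_set op le c \<noteq> {}" using assms(3) by blast
  have bdd: "bdd_above ((\<lambda>(y, z). min (f y) (g z)) ` A_set op le c)"
    by (rule bdd_aboveI[where M=1]) (use assms(1,2) in \<open>auto simp: min_le_iff_disj\<close>)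
  have "min (f y) (g z) \<le> Sup ((\<lambda>(y, z). min (f y) (g z)) ` A_set op le c)"
    by (rule cSup_upper) (use assms(3) bdd in auto)
  thus ?thesis using ne unfolding fuzzy_comp_def by simp
qed

lemma comp_le1:
  assumes "\<forall>x. f x \<le> 1"
  shows "fuzzy_comp op le f g c \<le> 1"
proof (cases "A_set op le c = {}")
  case False
  have "Sup ((\<lambda>(y, z). min (f y) (g z)) ` A_set op le c) \<le> 1"
    by (rule cSup_least) (use False assms in \<open>auto simp: min_le_iff_disj\<close>)
  thus ?thesis using False unfolding fuzzy_comp_def by simp
qed (simp add: fuzzy_comp_def)

lemma comp_pos:
  fixes f g :: "'m \<Rightarrow> real"
  assumes "fuzzy_comp op le f g c > 0"
  shows "\<exists>y z. (y, z) \<in> A_set op le c \<and> min (f y) (g z) > 0"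
proof (rule ccontr)
  assume H: "\<not> ?thesis"
  have ne: "A_set op le c \<noteq> {}" using assms by (auto simp: fuzzy_comp_def)
  have "Sup ((\<lambda>(y, z). min (f y) (g z)) ` A_set op le c) \<le> 0"
  proof (rule cSup_least)
    show "(\<lambda>(y, z). min (f y) (g z)) ` A_set op le c \<noteq> {}" using ne by simp
  next
    fix x assume "x \<in> (\<lambda>(y, z). min (f y) (g z)) ` A_set op le c"
    then obtain y z where "(y, z) \<in> A_set op le c" "x = min (f y) (g z)" by auto
    thus "x \<le> 0" using H by (auto simp: not_less min_le_iff_disj)
  qed
  thus False using assms ne unfolding fuzzy_comp_def by simp
qed

theorem theorem26:
  fixes op :: "'m \<Rightarrow> 'g \<Rightarrow> 'm \<Rightarrow> 'm" and le :: "'m \<Rightarrow> 'm \<Rightarrow> bool"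
  assumes "po_gamma_semigroup op le"
  shows "right_regular op le \<longleftrightarrow>
    (\<forall>f. fuzzy_subset f \<longrightarrow>
       fuzzy_le f (fuzzy_comp op le (fuzzy_comp op le f f) (\<lambda>_. 1)))"
proof
  assume rr: "right_regular op le"
  show "\<forall>f. fuzzy_subset f \<longrightarrow>
       fuzzy_le f (fuzzy_comp op le (fuzzy_comp op le f f) (\<lambda>_. 1))"
  proof (intro allI impI)
    fix f :: "'m \<Rightarrow> real" assume fs: "fuzzy_subset f"
    have f1: "\<forall>x. f x \<le> 1" using fs by (simp add: fuzzy_subset_def)
    show "fuzzy_le f (fuzzy_comp op le (fuzzy_comp op le f f) (\<lambda>_. 1))"
      unfolding fuzzy_le_def
    proof
      fix a
      obtain x \<gamma> \<mu> where h: "le a (op (op a \<gamma> a) \<mu> x)"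
        using rr unfolding right_regular_def down_closure_def aGaGM_def by blast
      have refl: "le (op a \<gamma> a) (op a \<gamma> a)" using assms by (simp add: po_gamma_semigroup_def)
      have "f a \<le> fuzzy_comp op le f f (op a \<gamma> a)"
        using comp_ge[OF f1 f1, of a a op le "op a \<gamma> a"] refl by (auto simp: A_set_def)
      hence "f a \<le> min (fuzzy_comp op le f f (op a \<gamma> a)) 1" using f1 by simp
      also have "\<dots> \<le> fuzzy_comp op le (fuzzy_comp op le f f) (\<lambda>_. 1) a"
      proof -
        have "(op a \<gamma> a, x) \<in> A_set op le a" using h by (auto simp: A_set_def)
        moreover have "\<forall>x. fuzzy_comp op le f f x \<le> 1" using comp_le1[OF f1] by blast
        ultimately show ?thesis
          using comp_ge[of "fuzzy_comp op le f f" "\<lambda>_. 1" "op a \<gamma> a" x op le a] by simp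
      qed
      finally show "f a \<le> fuzzy_comp op le (fuzzy_comp op le f f) (\<lambda>_. 1) a" .
    qed
  qed
next
  assume H: "\<forall>f. fuzzy_subset f \<longrightarrow>
       fuzzy_le f (fuzzy_comp op le (fuzzy_comp op le f f) (\<lambda>_. 1))"
  have tr: "\<And>a b c. le a b \<Longrightarrow> le b c \<Longrightarrow> le a c"
    and mono: "\<And>a b c \<gamma>. le a b \<Longrightarrow> le (op a \<gamma> c) (op b \<gamma> c)"
    using assms unfolding po_gamma_semigroup_def by blast+
  show "right_regular op le"
    unfolding right_regular_def
  proof
    fix a :: 'm
    define f where "f = (\<lambda>x. if x = a then 1 else (0::real))"
    have "fuzzy_subset f" by (simp add: f_def fuzzy_subset_def)
    hence "f a \<le> fuzzy_comp op le (fuzzy_comp op le f f) (\<lambda>_. 1) a"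
      using H by (simp add: fuzzy_le_def)
    hence "fuzzy_comp op le (fuzzy_comp op le f f) (\<lambda>_. 1) a > 0" by (simp add: f_def)
    then obtain y z where yz: "(y, z) \<in> A_set op le a"
      and p: "min (fuzzy_comp op le f f y) (1::real) > 0"
      using comp_pos[of op le "fuzzy_comp op le f f" "\<lambda>_. 1" a] by auto
    have "fuzzy_comp op le f f y > 0" using p by simp
    then obtain u v where uv: "(u, v) \<in> A_set op le y" and q: "min (f u) (f v) > 0"
      using comp_pos[of op le f f y] by blast
    have "u = a" "v = a" using q by (auto simp: f_def split: if_splits)
    then obtain \<gamma> where g: "le y (op a \<gamma> a)" using uv by (auto simp: A_set_def)
    obtain \<mu> where m: "le a (op y \<mu> z)" using yz by (auto simp: A_set_def)
    have "le a (op (op a \<gamma> a) \<mu> z)" using tr[OF m mono[OF g]] .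
    thus "a \<in> down_closure le (aGaGM op a)"
      by (auto simp: down_closure_def aGaGM_def)
  qed
qed

end
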